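(* Let $E_a\subseteq E$ be a set of directed links without self-loops, with maximum out-degree $D_a^+$ and maximum in-degree $D_a^-$ in $G_a=(V,E_a)$, and let $D$ be the maximum number of neighbors (excluding itself) of any node in the base topology $G$. Then the maximum degree $D_c$ of the conflict graph of $E_a$ satisfies $$D_c\le(D+1)\big(D_a^++D_a^-\big).$$
   Context: $G=(V,E)$ is a bidirected directed base topology on $V=\{1,\dots,n\}$ (with self-loops, which are not counted as neighbors). Communication model: two distinct directed links $(i,j),(k,l)$ (with $i\ne j$, $k\ne l$) can be scheduled in the same transmission slot iff (a) $i\ne l$ and $j\ne k$ (half-duplex), and (b) if $i\ne k$ then $(i,l)\notin E$ and $(k,j)\notin E$ (interference); otherwise they conflict. The conflict graph of $E_a$ is the undirected graph with vertex set $E_a$ and an edge between every conflicting pair; $D_c$ is its maximum vertex degree. In-/out-degrees in $G_a$ are $d_a^-(j)=|\{i:(i,j)\in E_a\}|$, $d_a^+(j)=|\{i:(j,i)\in E_a\}|$, with maxima $D_a^-,D_a^+$. *)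

theory Defs
  imports Main
begin

definition base_topology :: "nat \<Rightarrow> (nat \<times> nat) set \<Rightarrow> bool" where
  "base_topology n E \<longleftrightarrow>
     E \<subseteq> {1..n} \<times> {1..n} \<and>
     (\<forall>i j. (i, j) \<in> E \<longrightarrow> (j, i) \<in> E) \<and>
     (\<forall>i\<in>{1..n}. (i, i) \<in> E)"

definition nbrs :: "(nat \<times> nat) set \<Rightarrow> nat \<Rightarrow> nat set" where
  "nbrs E i = {j. j \<noteq> i \<and> (i, j) \<in> E}"

definition max_nbrs :: "nat \<Rightarrow> (nat \<times> nat) set \<Rightarrow> nat" where
  "max_nbrs n E = Max ((\<lambda>i. card (nbrs E i)) ` {1..n})"

definition conflict :: "(nat \<times> nat) set \<Rightarrow> nat \<times> nat \<Rightarrow> nat \<times> nat \<Rightarrow> bool" where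
  "conflict E e f = (case e of (i, j) \<Rightarrow> case f of (k, l) \<Rightarrow>
     \<not> ((i \<noteq> l \<and> j \<noteq> k) \<and> (i \<noteq> k \<longrightarrow> (i, l) \<notin> E \<and> (k, j) \<notin> E)))"

definition conflict_degree :: "(nat \<times> nat) set \<Rightarrow> (nat \<times> nat) set \<Rightarrow> nat \<times> nat \<Rightarrow> nat" where
  "conflict_degree E Ea e = card {f \<in> Ea. f \<noteq> e \<and> (conflict E e f \<or> conflict E f e)}"

(* D_c: maximum vertex degree of the conflict graph (0 if Ea is empty) *)
definition max_conflict_degree :: "(nat \<times> nat) set \<Rightarrow> (nat \<times> nat) set \<Rightarrow> nat" where
  "max_conflict_degree E Ea = Max (insert 0 (conflict_degree E Ea ` Ea))"

definition in_deg :: "(nat \<times> nat) set \<Rightarrow> nat \<Rightarrow> nat" where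
  "in_deg Ea j = card {i. (i, j) \<in> Ea}"

definition out_deg :: "(nat \<times> nat) set \<Rightarrow> nat \<Rightarrow> nat" where
  "out_deg Ea j = card {i. (j, i) \<in> Ea}"

definition max_in_deg :: "nat \<Rightarrow> (nat \<times> nat) set \<Rightarrow> nat" where
  "max_in_deg n Ea = Max ((in_deg Ea) ` {1..n})"

definition max_out_deg :: "nat \<Rightarrow> (nat \<times> nat) set \<Rightarrow> nat" where
  "max_out_deg n Ea = Max ((out_deg Ea) ` {1..n})"

end

theory Submission
  imports Defs
begin

lemma card_img_le_mult:
  fixes N :: "nat set" and g :: "nat \<Rightarrow> nat set" and h :: "nat \<Rightarrow> nat \<Rightarrow> nat \<times> nat"
  assumes "finite N" "\<And>l. l \<in> N \<Longrightarrow> finite (g l)" "\<And>l. l \<in> N \<Longrightarrow> card (g l) \<le> K"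
  shows "card (\<Union>l\<in>N. h l ` g l) \<le> card N * K"
proof -
  have "card (\<Union>l\<in>N. h l ` g l) \<le> (\<Sum>l\<in>N. card (h l ` g l))"
    by (rule card_UN_le[OF assms(1)])
  also have "\<dots> \<le> (\<Sum>l\<in>N. K)"
    by (rule sum_mono) (meson assms(3) card_image_le assms(2) order_trans)
  also have "\<dots> = card N * K" by simp
  finally show ?thesis .
qed

theorem lemma4:
  fixes n :: nat and E Ea :: "(nat \<times> nat) set"
  assumes "base_topology n E"
    and "Ea \<subseteq> E"
    and "\<forall>i. (i, i) \<notin> Ea"
  shows "max_conflict_degree E Ea
           \<le> (max_nbrs n E + 1) * (max_out_deg n Ea + max_in_deg n Ea)"
proof -
  have Esub: "E \<subseteq> {1..n} \<times> {1..n}" and sym: "\<And>i j. (i, j) \<in> E \<Longrightarrow> (j, i) \<in> E"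
    and refl: "\<And>i. i \<in> {1..n} \<Longrightarrow> (i, i) \<in> E"
    using assms(1) unfolding base_topology_def by auto
  have finE: "finite E" using Esub finite_subset by blast
  have finEa: "finite Ea" using assms(2) finE finite_subset by blast
  define D where "D = max_nbrs n E"
  define Di where "Di = max_in_deg n Ea"
  define Do where "Do = max_out_deg n Ea"
  have cN: "card {l. (i, l) \<in> E} \<le> D + 1" if "i \<in> {1..n}" for i
  proof -
    have "{l. (i, l) \<in> E} = insert i (nbrs E i)" using refl[OF that] unfolding nbrs_def by auto
    moreover have "finite (nbrs E i)"
      by (rule finite_subset[of _ "{1..n}"]) (use Esub in \<open>auto simp: nbrs_def\<close>)
    moreover have "card (nbrs E i) \<le> D" unfolding D_def max_nbrs_def
      using that by (intro Max_ge) auto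
    ultimately show ?thesis by (simp add: card_insert_if)
  qed
  have finN: "finite {l. (i, l) \<in> E}" for i
    by (rule finite_subset[of _ "{1..n}"]) (use Esub in auto)
  have finNi: "finite {k. (k, l) \<in> Ea}" for l
    by (rule finite_subset[of _ "{1..n}"]) (use Esub assms(2) in auto)
  have finNo: "finite {l. (k, l) \<in> Ea}" for k
    by (rule finite_subset[of _ "{1..n}"]) (use Esub assms(2) in auto)
  have inb: "card {k. (k, l) \<in> Ea} \<le> Di" if "(i, l) \<in> E" for i l
  proof -
    have "l \<in> {1..n}" using that Esub by auto
    then show ?thesis unfolding Di_def max_in_deg_def in_deg_def by (intro Max_ge) auto
  qed
  have outb: "card {l. (k, l) \<in> Ea} \<le> Do" if "(j, k) \<in> E" for j k
  proof -
    have "k \<in> {1..n}" using that Esub by auto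
    then show ?thesis unfolding Do_def max_out_deg_def out_deg_def by (intro Max_ge) auto
  qed
  have deg: "conflict_degree E Ea e \<le> (D + 1) * (Do + Di)" if "e \<in> Ea" for e
  proof -
    obtain i j where e: "e = (i, j)" by (cases e)
    have ij: "i \<in> {1..n}" "j \<in> {1..n}" using that e assms(2) Esub by auto
    define A where "A = (\<Union>l\<in>{l. (i, l) \<in> E}. (\<lambda>k. (k, l)) ` {k. (k, l) \<in> Ea})"
    define B where "B = (\<Union>k\<in>{k. (j, k) \<in> E}. (\<lambda>l. (k, l)) ` {l. (k, l) \<in> Ea})"
    have sub: "{f \<in> Ea. f \<noteq> e \<and> (conflict E e f \<or> conflict E f e)} \<subseteq> A \<union> B"
    proof
      fix f assume f: "f \<in> {f \<in> Ea. f \<noteq> e \<and> (conflict E e f \<or> conflict E f e)}"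
      obtain k l where fk: "f = (k, l)" by (cases f)
      have kl: "(k, l) \<in> Ea" using f fk by auto
      have "i = l \<or> j = k \<or> (i, l) \<in> E \<or> (k, j) \<in> E"
        using f fk e unfolding conflict_def by auto
      then have "(i, l) \<in> E \<or> (j, k) \<in> E" using refl ij sym by auto
      then show "f \<in> A \<union> B" unfolding A_def B_def using fk kl by auto
    qed
    have cA: "card A \<le> (D + 1) * Di"
    proof -
      have "card A \<le> card {l. (i, l) \<in> E} * Di" unfolding A_def
        by (rule card_img_le_mult) (use finN finNi inb in auto)
      also have "\<dots> \<le> (D + 1) * Di" using cN[OF ij(1)] by (rule mult_right_mono) simp
      finally show ?thesis .
    qed
    have cB: "card B \<le> (D + 1) * Do"
    proof -
      have "card B \<le> card {k. (j, k) \<in> E} * Do" unfolding B_def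
        by (rule card_img_le_mult) (use finN finNo outb in auto)
      also have "\<dots> \<le> (D + 1) * Do" using cN[OF ij(2)] by (rule mult_right_mono) simp
      finally show ?thesis .
    qed
    have finAB: "finite (A \<union> B)" unfolding A_def B_def using finN finNi finNo by auto
    have "conflict_degree E Ea e \<le> card (A \<union> B)" unfolding conflict_degree_def
      by (rule card_mono[OF finAB sub])
    also have "\<dots> \<le> card A + card B" by (rule card_Un_le)
    also have "\<dots> \<le> (D + 1) * (Do + Di)" using cA cB by (simp add: algebra_simps)
    finally show ?thesis .
  qed
  show ?thesis unfolding max_conflict_degree_def D_def[symmetric] Di_def[symmetric] Do_def[symmetric]
    using deg finEa by (subst Max_le_iff) auto
qed

end
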